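(* (i) Let $P(z,\bar z)=\alpha_{n,0}z^n+P_{n-1}(z,\bar z)$ be a polyanalytic polynomial with $\alpha_{n,0}\in\mathbb{C}\setminus\{0\}$, where $P_{n-1}$ is a polyanalytic polynomial with $\deg(P_{n-1})\leq n-1$. Then $P$ has at most $n^2$ zeros. (ii) Let $P(z,\bar z)=p(z)+\overline{q(z)}$, where $p,q$ are analytic polynomials with $\deg(p)=n>\deg(q)$. Then $P$ has at most $n^2$ zeros. Moreover, in both (i) and (ii), if $P$ has exactly $n^2$ zeros, then $P$ is irreducible.
   Context: A polyanalytic polynomial is a function $\mathbb{C}\to\mathbb{C}$ of the form $P(z,\bar z)=\sum_{j+k\le n}\alpha_{j,k} z^j \bar z^{k}$ with complex coefficients (a polynomial in $z$ and $\bar z$); two such polynomials are equal iff all coefficients agree. Its degree is the largest $j+k$ with $\alpha_{j,k}\neq 0$. $P$ is reducible if $P=P_1P_2$ for polyanalytic polynomials with $\deg(P_1),\deg(P_2)\geq 1$, and irreducible otherwise. A zero of $P$ is a point $z\in\mathbb{C}$ with $P(z,\bar z)=0$; zeros are counted as distinct points. *)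

theory Defs
  imports Complex_Main "HOL-Computational_Algebra.Polynomial"
begin

text \<open>A polyanalytic polynomial P(z, zbar) = sum of a_jk z^j zbar^k is represented as a
  polynomial in zbar whose coefficients are polynomials in z:
  coeff P k is the polynomial in z multiplying zbar^k.\<close>

type_synonym polyanalytic = "complex poly poly"

definition pa_eval :: "polyanalytic \<Rightarrow> complex \<Rightarrow> complex" where
  "pa_eval P z = (\<Sum>k\<le>degree P. poly (coeff P k) z * cnj z ^ k)"

definition pa_deg :: "polyanalytic \<Rightarrow> nat" where
  "pa_deg P = Max ({k + degree (coeff P k) | k. coeff P k \<noteq> 0} \<union> {0})"

definition pa_reducible :: "polyanalytic \<Rightarrow> bool" where
  "pa_reducible P \<longleftrightarrow> (\<exists>P1 P2. P = P1 * P2 \<and> pa_deg P1 \<ge> 1 \<and> pa_deg P2 \<ge> 1)"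

definition pa_irreducible :: "polyanalytic \<Rightarrow> bool" where
  "pa_irreducible P \<longleftrightarrow> \<not> pa_reducible P"

definition pa_zeros :: "polyanalytic \<Rightarrow> complex set" where
  "pa_zeros P = {z. pa_eval P z = 0}"

definition pa_zmonom :: "complex \<Rightarrow> nat \<Rightarrow> polyanalytic" where
  "pa_zmonom a n = [:monom a n:]"

text \<open>p(z) + conj(q(z)) for analytic polynomials p, q: conj(q(z)) = sum conj(q_k) zbar^k.\<close>
definition pa_harmonic :: "complex poly \<Rightarrow> complex poly \<Rightarrow> polyanalytic" where
  "pa_harmonic p q = [:p:] + map_poly (\<lambda>c. [:cnj c:]) q"

end

theory Submission imports Defs "HOL-Library.Function_Algebras" begin

lemma map_poly_add_hom:
  assumes "f 0 = 0" "\<And>a b. f (a+b) = f a + f b"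
  shows "map_poly f (p+q) = map_poly f p + map_poly f q"
  by (rule poly_eqI) (simp add: coeff_map_poly assms)

lemma map_poly_mult_hom:
  fixes f :: "'a::comm_ring_1 \<Rightarrow> 'b::comm_ring_1"
  assumes "f 0 = 0" "\<And>a b. f (a+b) = f a + f b" "\<And>a b. f (a*b) = f a * f b"
  shows "map_poly f (p*q) = map_poly f p * map_poly f q"
proof (rule poly_eqI)
  fix n
  have sum: "\<And>g. f (sum g A) = sum (\<lambda>i. f (g i)) A" for A :: "nat set"
    by (induct A rule: infinite_finite_induct) (auto simp: assms)
  show "coeff (map_poly f (p * q)) n = coeff (map_poly f p * map_poly f q) n"
    by (simp add: coeff_map_poly coeff_mult assms sum)
qed

lemma poly_sum_le:
  fixes p :: "'a::comm_ring_1 poly"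
  assumes "degree p \<le> N"
  shows "poly p x = (\<Sum>i\<le>N. coeff p i * x ^ i)"
  apply (subst poly_altdef)
  using assms by (intro sum.mono_neutral_left) (auto simp: coeff_eq_0)

lemma pa_eval_alt: "pa_eval P z = poly (map_poly (\<lambda>c. poly c z) P) (cnj z)"
proof -
  have "poly (map_poly (\<lambda>c. poly c z) P) (cnj z) = (\<Sum>k\<le>degree P. coeff (map_poly (\<lambda>c. poly c z) P) k * cnj z ^ k)"
    by (rule poly_sum_le) (rule map_poly_degree_leq)
  thus ?thesis by (simp add: pa_eval_def coeff_map_poly)
qed

lemma pa_eval_mult: "pa_eval (A * B) z = pa_eval A z * pa_eval B z"
  unfolding pa_eval_alt
  by (subst map_poly_mult_hom) auto

definition psi :: "complex poly \<Rightarrow> complex poly poly" where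
  "psi c = map_poly (\<lambda>a. [:a:]) c"

definition phi :: "polyanalytic \<Rightarrow> complex poly poly" where
  "phi A = poly (map_poly psi A) (monom (monom 1 1) 1)"

lemma psi_add: "psi (a + b) = psi a + psi b"
  unfolding psi_def by (rule map_poly_add_hom) auto

lemma psi_mult: "psi (a * b) = psi a * psi b"
  unfolding psi_def by (rule map_poly_mult_hom) auto

lemma pconst_add: "(map_poly (\<lambda>a. [:a:]) ((a::complex poly) + b) :: complex poly poly) = map_poly (\<lambda>a. [:a:]) a + map_poly (\<lambda>a. [:a:]) b"
  by (rule map_poly_add_hom) auto

lemma pconst_mult: "(map_poly (\<lambda>a. [:a:]) ((a::complex poly) * b) :: complex poly poly) = map_poly (\<lambda>a. [:a:]) a * map_poly (\<lambda>a. [:a:]) b"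
  by (rule map_poly_mult_hom) auto

lemma phi_mult: "phi (A * B) = phi A * phi B"
  unfolding phi_def
  by (subst map_poly_mult_hom) (auto simp: psi_add psi_mult psi_def pconst_add pconst_mult)

lemma coeff_phi: "coeff (coeff (phi A) m) i = (if i \<le> m then coeff (coeff A i) (m - i) else 0)"
proof -
  have "phi A = (\<Sum>k\<le>degree A. psi (coeff A k) * monom (monom 1 k) k)"
    unfolding phi_def
    by (subst poly_sum_le[OF map_poly_degree_leq]) (simp add: coeff_map_poly psi_def monom_power)
  hence "coeff (coeff (phi A) m) i = (\<Sum>k\<le>degree A. coeff (coeff (psi (coeff A k) * monom (monom 1 k) k) m) i)"
    by (simp add: coeff_sum)
  also have "\<dots> = (\<Sum>k\<le>degree A. if k = i \<and> k \<le> m then coeff (coeff A k) (m - k) else 0)"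
    apply (rule sum.cong, simp)
    apply (subst mult.commute)
    apply (simp add: coeff_monom_mult psi_def coeff_map_poly coeff_monom)
    done
  also have "\<dots> = (if i \<le> m then coeff (coeff A i) (m - i) else 0)"
  proof (cases "i \<le> degree A")
    case True
    show ?thesis
    proof (cases "i \<le> m")
      case True
      have "(\<Sum>k\<le>degree A. if k = i \<and> k \<le> m then coeff (coeff A k) (m - k) else 0)
          = (\<Sum>k\<le>degree A. if k = i then coeff (coeff A k) (m - k) else 0)"
        using True by (intro sum.cong) auto
      then show ?thesis using True \<open>i \<le> degree A\<close> by (simp add: sum.delta)
    qed (auto intro!: sum.neutral)
  next
    case False
    then show ?thesis by (auto simp: coeff_eq_0 not_le intro!: sum.neutral)
  qed
  finally show ?thesis .
qed

definition good :: "nat \<Rightarrow> polyanalytic \<Rightarrow> bool" where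
  "good n A \<longleftrightarrow> coeff (coeff A 0) n \<noteq> 0 \<and>
     (\<forall>j k. coeff (coeff A k) j \<noteq> 0 \<longrightarrow> (j = n \<and> k = 0) \<or> j + k < n)"

lemma good_phi:
  assumes "good n A"
  shows "degree (phi A) = n \<and> coeff (phi A) n = [:coeff (coeff A 0) n:]"
proof -
  have z: "coeff (phi A) m = 0" if "m > n" for m
  proof (rule poly_eqI)
    fix i show "coeff (coeff (phi A) m) i = coeff 0 i"
    proof (cases "i \<le> m")
      case True
      have "coeff (coeff A i) (m-i) = 0"
      proof (rule ccontr)
        assume "coeff (coeff A i) (m-i) \<noteq> 0"
        with assms have "(m-i = n \<and> i = 0) \<or> m - i + i < n" unfolding good_def by blast
        thus False using True that by auto
      qed
      thus ?thesis using True by (simp add: coeff_phi)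
    qed (simp add: coeff_phi)
  qed
  have c: "coeff (phi A) n = [:coeff (coeff A 0) n:]"
  proof (rule poly_eqI)
    fix i show "coeff (coeff (phi A) n) i = coeff [:coeff (coeff A 0) n:] i"
    proof (cases "i = 0")
      case True thus ?thesis by (simp add: coeff_phi)
    next
      case False
      have "coeff (coeff A i) (n-i) = 0" if "i \<le> n"
      proof (rule ccontr)
        assume "coeff (coeff A i) (n-i) \<noteq> 0"
        with assms have "(n-i = n \<and> i = 0) \<or> n - i + i < n" unfolding good_def by blast
        thus False using False that by auto
      qed
      thus ?thesis using False by (cases i) (auto simp: coeff_phi)
    qed
  qed
  have "degree (phi A) \<le> n" using z by (meson degree_le not_le_imp_less)
  moreover have "coeff (phi A) n \<noteq> 0" using c assms by (simp add: good_def)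
  ultimately show ?thesis using c le_degree by (metis le_antisym)
qed

lemma phi_good:
  assumes "degree (phi A) = d" "coeff (phi A) d = [:c:]" "c \<noteq> 0"
  shows "good d A"
  unfolding good_def
proof (intro conjI allI impI)
  show "coeff (coeff A 0) d \<noteq> 0"
    using assms coeff_phi[of A d 0] by simp
  fix j k assume ne: "coeff (coeff A k) j \<noteq> 0"
  have "coeff (coeff (phi A) (j+k)) k \<noteq> 0" using ne by (simp add: coeff_phi)
  hence "coeff (phi A) (j+k) \<noteq> 0" by auto
  have le: "j + k \<le> d" using le_degree[OF \<open>coeff (phi A) (j+k) \<noteq> 0\<close>] assms(1) by simp
  show "j = d \<and> k = 0 \<or> j + k < d"
  proof (cases "j + k = d")
    case True
    with \<open>coeff (coeff (phi A) (j+k)) k \<noteq> 0\<close> assms have "coeff [:c:] k \<noteq> 0" by simp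
    hence "k = 0" by (cases k) auto
    with True show ?thesis by simp
  qed (use le in auto)
qed

lemma good_prod:
  assumes "good n (A * B)"
  obtains d1 d2 where "good d1 A" "good d2 B" "d1 + d2 = n"
proof -
  define a where "a = coeff (coeff (A*B) 0) n"
  have a0: "a \<noteq> 0" using assms by (simp add: good_def a_def)
  have a: "degree (phi (A*B)) = n" "coeff (phi (A*B)) n = [:a:]"
    using good_phi[OF assms] by (simp_all add: a_def)
  have pm: "phi (A*B) = phi A * phi B" by (rule phi_mult)
  have nz: "phi (A*B) \<noteq> 0" using a(2) a0 by (metis coeff_0 pCons_eq_0_iff)
  hence nA: "phi A \<noteq> 0" and nB: "phi B \<noteq> 0" using pm by auto
  have dg: "degree (phi A) + degree (phi B) = n" using a(1) pm degree_mult_eq[OF nA nB] by simp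
  have "lead_coeff (phi (A*B)) = [:a:]" using a by simp
  hence lc: "lead_coeff (phi A) * lead_coeff (phi B) = [:a:]"
    unfolding pm lead_coeff_mult .
  have lA: "lead_coeff (phi A) \<noteq> 0" and lB: "lead_coeff (phi B) \<noteq> 0" using nA nB by auto
  have "degree (lead_coeff (phi A)) + degree (lead_coeff (phi B)) = 0"
    using degree_mult_eq[OF lA lB] lc by simp
  hence "degree (lead_coeff (phi A)) = 0" "degree (lead_coeff (phi B)) = 0" by auto
  then obtain cA cB where cA: "lead_coeff (phi A) = [:cA:]" and cB: "lead_coeff (phi B) = [:cB:]"
    using degree_eq_zeroE by metis
  have "cA \<noteq> 0" "cB \<noteq> 0" using cA cB lA lB by auto
  have gA: "good (degree (phi A)) A" by (rule phi_good[OF refl cA \<open>cA \<noteq> 0\<close>])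
  have gB: "good (degree (phi B)) B" by (rule phi_good[OF refl cB \<open>cB \<noteq> 0\<close>])
  show ?thesis by (rule that[OF gA gB dg])
qed

lemma good0_deg:
  assumes "good 0 A"
  shows "pa_deg A = 0"
proof -
  have "{k + degree (coeff A k) | k. coeff A k \<noteq> 0} \<subseteq> {0}"
  proof
    fix x assume "x \<in> {k + degree (coeff A k) | k. coeff A k \<noteq> 0}"
    then obtain k where x: "x = k + degree (coeff A k)" "coeff A k \<noteq> 0" by auto
    hence "coeff (coeff A k) (degree (coeff A k)) \<noteq> 0" by simp
    hence "degree (coeff A k) = 0 \<and> k = 0" using assms unfolding good_def by blast
    hence "degree (coeff A k) = 0" "k = 0" by blast+
    thus "x \<in> {0}" using x(1) by simp
  qed
  hence eq: "{k + degree (coeff A k) | k. coeff A k \<noteq> 0} \<union> {0} = {0}" by (rule Un_absorb1)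
  show ?thesis unfolding pa_deg_def eq by simp
qed

definition sc :: "complex \<Rightarrow> (complex \<Rightarrow> complex) \<Rightarrow> (complex \<Rightarrow> complex)" where
  "sc c f = (\<lambda>x. c * f x)"

interpretation FV: vector_space sc
  by unfold_locales (auto simp: sc_def fun_eq_iff algebra_simps)

lemma fun_sum_apply: "(sum f A) x = sum (\<lambda>a. f a x) A"
  by (induct A rule: infinite_finite_induct) auto

lemma eval_box:
  assumes "\<forall>j k. coeff (coeff A k) j \<noteq> 0 \<longrightarrow> j \<le> N \<and> k \<le> N"
  shows "pa_eval A x = (\<Sum>k\<le>N. \<Sum>j\<le>N. coeff (coeff A k) j * x^j * cnj x^k)"
proof -
  have dA: "degree A \<le> N"
  proof (cases "A = 0")
    case False
    hence "coeff A (degree A) \<noteq> 0" by simp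
    hence "coeff (coeff A (degree A)) (degree (coeff A (degree A))) \<noteq> 0" by simp
    thus ?thesis using assms by blast
  qed simp
  have dk: "degree (coeff A k) \<le> N" for k
  proof (cases "coeff A k = 0")
    case False
    hence "coeff (coeff A k) (degree (coeff A k)) \<noteq> 0" by simp
    thus ?thesis using assms by blast
  qed simp
  have "pa_eval A x = (\<Sum>k\<le>N. coeff (map_poly (\<lambda>c. poly c x) A) k * cnj x^k)"
    unfolding pa_eval_alt
    by (rule poly_sum_le) (rule order_trans[OF map_poly_degree_leq dA])
  also have "\<dots> = (\<Sum>k\<le>N. (\<Sum>j\<le>N. coeff (coeff A k) j * x^j) * cnj x^k)"
    by (intro sum.cong refl) (simp add: coeff_map_poly poly_sum_le[OF dk])
  also have "\<dots> = (\<Sum>k\<le>N. \<Sum>j\<le>N. coeff (coeff A k) j * x^j * cnj x^k)"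
    by (simp add: sum_distrib_right)
  finally show ?thesis .
qed

lemma good_card_aux:
  assumes g: "good n A" and S: "finite S" "S \<subseteq> pa_zeros A"
  shows "card S \<le> n^2"
proof -
  define a where "a j k = coeff (coeff A k) j" for j k
  define \<alpha> where "\<alpha> = a n 0"
  define b where "b j k = (if j = n \<and> k = 0 then 0 else a j k)" for j k
  have \<alpha>0: "\<alpha> \<noteq> 0" using g by (simp add: good_def \<alpha>_def a_def)
  have bnz: "b j k \<noteq> 0 \<Longrightarrow> j + k < n" for j k
    using g unfolding good_def b_def a_def by (auto split: if_splits)
  have box: "\<forall>j k. coeff (coeff A k) j \<noteq> 0 \<longrightarrow> j \<le> n \<and> k \<le> n"
    using g unfolding good_def by fastforce
  have ident: "\<alpha> * x^n = - (\<Sum>k\<le>n. \<Sum>j\<le>n. b j k * x^j * cnj x^k)" if "x \<in> S" for x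
  proof -
    have "0 = pa_eval A x" using that S by (auto simp: pa_zeros_def)
    also have "\<dots> = (\<Sum>k\<le>n. \<Sum>j\<le>n. a j k * x^j * cnj x^k)"
      unfolding eval_box[OF box] a_def ..
    also have "\<dots> = (\<Sum>k\<le>n. \<Sum>j\<le>n. b j k * x^j * cnj x^k + (if j = n \<and> k = 0 then \<alpha> * x^n else 0))"
      by (intro sum.cong refl) (auto simp: b_def \<alpha>_def)
    also have "\<dots> = (\<Sum>k\<le>n. \<Sum>j\<le>n. b j k * x^j * cnj x^k) + (\<Sum>k\<le>n. \<Sum>j\<le>n. (if j = n \<and> k = 0 then \<alpha> * x^n else 0))"
      by (simp add: sum.distrib)
    also have "(\<Sum>k\<le>n. \<Sum>j\<le>n. (if j = n \<and> k = 0 then \<alpha> * x^n else 0)) = (\<Sum>k\<le>n. if k = 0 then \<alpha> * x^n else 0)"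
      by (intro sum.cong refl) (auto)
    also have "\<dots> = \<alpha> * x^n" by simp
    finally show ?thesis by (simp add: eq_neg_iff_add_eq_0 add.commute)
  qed
  have identc: "cnj \<alpha> * cnj x^n = - (\<Sum>k\<le>n. \<Sum>j\<le>n. cnj (b j k) * x^k * cnj x^j)" if "x \<in> S" for x
  proof -
    have "cnj (\<alpha> * x^n) = cnj (- (\<Sum>k\<le>n. \<Sum>j\<le>n. b j k * x^j * cnj x^k))"
      using ident[OF that] by simp
    thus ?thesis by (simp add: cnj_sum mult.commute mult.left_commute)
  qed
  define R where "R f = (\<lambda>x. if x \<in> S then f x else (0::complex))" for f :: "complex \<Rightarrow> complex"
  define m where "m i j = (\<lambda>x::complex. x^i * cnj x^j)" for i j :: nat
  define B where "B = (\<lambda>(i,j). R (m i j)) ` ({..<n} \<times> {..<n})"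
  have finB: "finite B" unfolding B_def by simp
  have cardB: "card B \<le> n^2"
  proof -
    have "card B \<le> card ({..<n} \<times> {..<n})" unfolding B_def by (rule card_image_le) simp
    thus ?thesis by (simp add: power2_eq_square)
  qed
  have sc0: "sc 0 f = 0" for f by (simp add: sc_def fun_eq_iff)
  have claim1: "R (m i j) \<in> FV.span B" for i j
  proof (induction "i+j" arbitrary: i j rule: less_induct)
    case less
    consider "i < n \<and> j < n" | "n \<le> i" | "n \<le> j" by linarith
    then show ?case
    proof cases
      case 1
      hence "R (m i j) \<in> B" unfolding B_def by force
      thus ?thesis by (rule FV.span_base)
    next
      case 2
      have eq: "R (m i j) = (\<Sum>k\<le>n. \<Sum>j'\<le>n. sc (- b j' k / \<alpha>) (R (m (i-n+j') (j+k))))"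
      proof (rule ext)
        fix x
        show "R (m i j) x = (\<Sum>k\<le>n. \<Sum>j'\<le>n. sc (- b j' k / \<alpha>) (R (m (i-n+j') (j+k)))) x"
        proof (cases "x \<in> S")
          case True
          have "x^i * cnj x^j = x^(i-n) * cnj x^j * (\<alpha> * x^n) / \<alpha>"
            using \<alpha>0 2 by (simp add: power_add[symmetric])
          also have "\<dots> = x^(i-n) * cnj x^j * (- (\<Sum>k\<le>n. \<Sum>j'\<le>n. b j' k * x^j' * cnj x^k)) / \<alpha>"
            using ident[OF True] by simp
          also have "\<dots> = (\<Sum>k\<le>n. \<Sum>j'\<le>n. (- b j' k / \<alpha>) * (x^(i-n+j') * cnj x^(j+k)))"
            by (simp add: sum_distrib_left sum_divide_distrib power_add sum_negf[symmetric] algebra_simps)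
          finally show ?thesis using True
            by (simp add: R_def m_def fun_sum_apply sc_def)
        qed (simp add: R_def fun_sum_apply sc_def)
      qed
      show ?thesis unfolding eq
      proof (intro FV.span_sum)
        fix k j' assume "k \<in> {..n}" "j' \<in> {..n}"
        show "sc (- b j' k / \<alpha>) (R (m (i-n+j') (j+k))) \<in> FV.span B"
        proof (cases "b j' k = 0")
          case True thus ?thesis by (simp add: sc0 FV.span_zero)
        next
          case False
          hence "j' + k < n" by (rule bnz)
          hence "i - n + j' + (j + k) < i + j" using 2 by linarith
          thus ?thesis using less.hyps by (intro FV.span_scale) auto
        qed
      qed
    next
      case 3
      have eq: "R (m i j) = (\<Sum>k\<le>n. \<Sum>j'\<le>n. sc (- cnj (b j' k) / cnj \<alpha>) (R (m (i+k) (j-n+j'))))"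
      proof (rule ext)
        fix x
        show "R (m i j) x = (\<Sum>k\<le>n. \<Sum>j'\<le>n. sc (- cnj (b j' k) / cnj \<alpha>) (R (m (i+k) (j-n+j')))) x"
        proof (cases "x \<in> S")
          case True
          have "x^i * cnj x^j = x^i * cnj x^(j-n) * (cnj \<alpha> * cnj x^n) / cnj \<alpha>"
            using \<alpha>0 3 by (simp add: power_add[symmetric])
          also have "\<dots> = x^i * cnj x^(j-n) * (- (\<Sum>k\<le>n. \<Sum>j'\<le>n. cnj (b j' k) * x^k * cnj x^j')) / cnj \<alpha>"
            using identc[OF True] by simp
          also have "\<dots> = (\<Sum>k\<le>n. \<Sum>j'\<le>n. (- cnj (b j' k) / cnj \<alpha>) * (x^(i+k) * cnj x^(j-n+j')))"
            by (simp add: sum_distrib_left sum_divide_distrib power_add sum_negf[symmetric] algebra_simps)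
          finally show ?thesis using True
            by (simp add: R_def m_def fun_sum_apply sc_def)
        qed (simp add: R_def fun_sum_apply sc_def)
      qed
      show ?thesis unfolding eq
      proof (intro FV.span_sum)
        fix k j' assume "k \<in> {..n}" "j' \<in> {..n}"
        show "sc (- cnj (b j' k) / cnj \<alpha>) (R (m (i+k) (j-n+j'))) \<in> FV.span B"
        proof (cases "b j' k = 0")
          case True thus ?thesis by (simp add: sc0 FV.span_zero)
        next
          case False
          hence "j' + k < n" by (rule bnz)
          hence "i + k + (j - n + j') < i + j" using 3 by linarith
          thus ?thesis using less.hyps by (intro FV.span_scale) auto
        qed
      qed
    qed
  qed
  have claim2: "R (poly p) \<in> FV.span B" for p
  proof -
    have "R (poly p) = (\<Sum>i\<le>degree p. sc (coeff p i) (R (m i 0)))"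
      by (rule ext) (simp add: R_def m_def fun_sum_apply sc_def poly_altdef)
    thus ?thesis by (simp add: FV.span_sum FV.span_scale claim1)
  qed
  define \<delta> where "\<delta> s = (\<lambda>x::complex. if x = s then 1 else (0::complex))" for s
  have claim3: "\<delta> s \<in> FV.span B" if s: "s \<in> S" for s
  proof -
    define c where "c = (\<Prod>t\<in>S-{s}. s - t)"
    have c0: "c \<noteq> 0" unfolding c_def using S(1) by (auto simp: prod_zero_iff)
    define L where "L = smult (1/c) (\<Prod>t\<in>S-{s}. [:-t,1:])"
    have pL: "poly L x = (\<Prod>t\<in>S-{s}. x - t) / c" for x
      by (simp add: L_def poly_prod)
    have "R (poly L) = \<delta> s"
    proof (rule ext)
      fix x show "R (poly L) x = \<delta> s x"
      proof (cases "x \<in> S")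
        case True
        show ?thesis
        proof (cases "x = s")
          case True thus ?thesis using c0 by (simp add: R_def \<delta>_def pL c_def s)
        next
          case False
          hence "(\<Prod>t\<in>S-{s}. x - t) = 0" using \<open>x \<in> S\<close> S(1) by (auto simp: prod_zero_iff)
          thus ?thesis using False \<open>x \<in> S\<close> by (simp add: R_def \<delta>_def pL)
        qed
      next
        case False thus ?thesis using s by (auto simp: R_def \<delta>_def)
      qed
    qed
    thus ?thesis using claim2 by metis
  qed
  have dval: "y s = (if y = \<delta> s then 1 else 0)" if ys: "y \<in> \<delta> ` S" "s \<in> S" for y s
  proof -
    obtain t where t: "t \<in> S" "y = \<delta> t" using ys by auto
    have "\<delta> t = \<delta> s \<longleftrightarrow> t = s"
    proof
      assume "\<delta> t = \<delta> s" hence "\<delta> t t = \<delta> s t" by simp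
      thus "t = s" by (simp add: \<delta>_def split: if_splits)
    qed simp
    thus ?thesis using t by (auto simp: \<delta>_def)
  qed
  have indep: "FV.independent (\<delta> ` S)"
  proof (rule FV.independent_if_scalars_zero)
    show "finite (\<delta> ` S)" using S by simp
    fix f x assume sum0: "(\<Sum>y\<in>\<delta> ` S. sc (f y) y) = 0" and x: "x \<in> \<delta> ` S"
    then obtain s where s: "s \<in> S" "x = \<delta> s" by auto
    have "0 = (\<Sum>y\<in>\<delta> ` S. sc (f y) y) s" using sum0 by simp
    also have "\<dots> = (\<Sum>y\<in>\<delta> ` S. if y = \<delta> s then f y else 0)"
      unfolding fun_sum_apply sc_def using s by (intro sum.cong refl) (simp add: dval)
    also have "\<dots> = f (\<delta> s)" using s S(1) by (simp add: sum.delta)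
    finally show "f x = 0" using s by simp
  qed
  have inj: "inj_on \<delta> S"
  proof (rule inj_onI)
    fix s t assume "s \<in> S" "t \<in> S" "\<delta> s = \<delta> t"
    hence "\<delta> s s = \<delta> t s" by simp
    thus "s = t" by (simp add: \<delta>_def split: if_splits)
  qed
  have "card (\<delta> ` S) \<le> card B"
    using FV.independent_span_bound[OF finB indep] claim3 by blast
  thus ?thesis using cardB card_image[OF inj] by simp
qed

lemma good_bound:
  assumes "good n A"
  shows "finite (pa_zeros A) \<and> card (pa_zeros A) \<le> n^2"
proof -
  have fin: "finite (pa_zeros A)"
  proof (rule ccontr)
    assume "infinite (pa_zeros A)"
    then obtain S where "S \<subseteq> pa_zeros A" "finite S" "card S = n^2 + 1"
      using infinite_arbitrarily_large by blast
    thus False using good_card_aux[OF assms] by fastforce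
  qed
  thus ?thesis using good_card_aux[OF assms fin] by simp
qed

lemma pa_deg_ge:
  assumes "coeff (coeff Q k) j \<noteq> 0"
  shows "j + k \<le> pa_deg Q"
proof -
  have ck: "coeff Q k \<noteq> 0" using assms by auto
  have j: "j \<le> degree (coeff Q k)" using assms le_degree by blast
  let ?X = "{k + degree (coeff Q k) | k. coeff Q k \<noteq> 0} \<union> {0}"
  have "?X \<subseteq> (\<lambda>k. k + degree (coeff Q k)) ` {..degree Q} \<union> {0}"
    using le_degree by fastforce
  hence fin: "finite ?X" by (rule finite_subset) simp
  have "k + degree (coeff Q k) \<in> ?X" using ck by blast
  hence "k + degree (coeff Q k) \<le> pa_deg Q" unfolding pa_deg_def using fin by (rule Max_ge[rotated])
  thus ?thesis using j by simp
qed

lemma good_i: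
  assumes "\<alpha> \<noteq> 0" "Q = 0 \<or> pa_deg Q < n"
  shows "good n (pa_zmonom \<alpha> n + Q)"
proof -
  have q: "coeff (coeff Q k) j \<noteq> 0 \<Longrightarrow> j + k < n" for j k
    using assms(2) pa_deg_ge[of Q k j] by auto
  have c: "coeff (coeff (pa_zmonom \<alpha> n + Q) k) j = (if k = 0 \<and> j = n then \<alpha> else 0) + coeff (coeff Q k) j" for j k
    by (cases k) (auto simp: pa_zmonom_def coeff_monom)
  show ?thesis unfolding good_def c using q assms(1)
    by (metis add.right_neutral add_cancel_right_right less_not_refl)
qed

lemma good_ii:
  assumes "degree p = n" "degree q < n"
  shows "good n (pa_harmonic p q)"
proof -
  have c: "coeff (coeff (pa_harmonic p q) k) j = (if k = 0 then coeff p j else 0) + (if j = 0 then cnj (coeff q k) else 0)" for j k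
    by (cases k; cases j) (auto simp: pa_harmonic_def coeff_map_poly)
  have n0: "n > 0" using assms by simp
  hence "p \<noteq> 0" using assms by auto
  hence lp: "coeff p n \<noteq> 0" using assms by auto
  show ?thesis unfolding good_def c
  proof (intro conjI allI impI)
    show "(if 0 = 0 then coeff p n else 0) + (if n = 0 then cnj (coeff q 0) else 0) \<noteq> 0"
      using n0 lp by simp
    fix j k
    assume ne: "(if k = 0 then coeff p j else 0) + (if j = 0 then cnj (coeff q k) else 0) \<noteq> 0"
    show "j = n \<and> k = 0 \<or> j + k < n"
    proof (cases "k = 0")
      case True
      show ?thesis
      proof (cases "j = 0")
        case True thus ?thesis using n0 \<open>k = 0\<close> by simp
      next
        case False
        hence "coeff p j \<noteq> 0" using ne \<open>k = 0\<close> by simp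
        hence "j \<le> n" using le_degree assms(1) by blast
        thus ?thesis using \<open>k = 0\<close> by auto
      qed
    next
      case False
      hence "j = 0" "coeff q k \<noteq> 0" using ne by (auto split: if_splits)
      hence "k \<le> degree q" using le_degree by blast
      thus ?thesis using \<open>j = 0\<close> assms(2) by simp
    qed
  qed
qed

lemma good_irred:
  assumes g: "good n P" and c: "card (pa_zeros P) = n^2"
  shows "pa_irreducible P"
  unfolding pa_irreducible_def pa_reducible_def
proof
  assume "\<exists>P1 P2. P = P1 * P2 \<and> 1 \<le> pa_deg P1 \<and> 1 \<le> pa_deg P2"
  then obtain P1 P2 where P: "P = P1 * P2" and d: "1 \<le> pa_deg P1" "1 \<le> pa_deg P2" by blast
  obtain d1 d2 where g1: "good d1 P1" and g2: "good d2 P2" and s: "d1 + d2 = n"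
    using good_prod g P by blast
  have "d1 \<noteq> 0"
  proof
    assume "d1 = 0" hence "pa_deg P1 = 0" using g1 good0_deg by simp
    thus False using d by simp
  qed
  moreover have "d2 \<noteq> 0"
  proof
    assume "d2 = 0" hence "pa_deg P2 = 0" using g2 good0_deg by simp
    thus False using d by simp
  qed
  ultimately have "0 < d1 * d2" by simp
  moreover have "n^2 = d1^2 + d2^2 + 2*d1*d2" using s[symmetric] by (simp add: power2_sum)
  ultimately have lt: "d1^2 + d2^2 < n^2" by linarith
  have "pa_zeros P = pa_zeros P1 \<union> pa_zeros P2"
    unfolding P pa_zeros_def by (auto simp: pa_eval_mult)
  hence "card (pa_zeros P) \<le> card (pa_zeros P1) + card (pa_zeros P2)"
    by (simp add: card_Un_le)
  also have "\<dots> \<le> d1^2 + d2^2" using good_bound[OF g1] good_bound[OF g2] by simp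
  finally show False using lt c by simp
qed

theorem corollary2p14:
  shows
  "(\<forall>(\<alpha>::complex) (n::nat) (Q::polyanalytic).
       \<alpha> \<noteq> 0 \<and> (Q = 0 \<or> pa_deg Q < n) \<longrightarrow>
       (let P = pa_zmonom \<alpha> n + Q in
          finite (pa_zeros P) \<and> card (pa_zeros P) \<le> n ^ 2 \<and>
          (card (pa_zeros P) = n ^ 2 \<longrightarrow> pa_irreducible P)))
   \<and>
   (\<forall>(p::complex poly) (q::complex poly) (n::nat).
       degree p = n \<and> degree q < n \<longrightarrow>
       (let P = pa_harmonic p q in
          finite (pa_zeros P) \<and> card (pa_zeros P) \<le> n ^ 2 \<and>
          (card (pa_zeros P) = n ^ 2 \<longrightarrow> pa_irreducible P)))"
  unfolding Let_def
  using good_bound good_irred good_i good_ii by blast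

end
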